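(* For an odd integer $n>1$ and an integer $m\geq 3$, $$\chi_{ld}(P_{m}[\overline{K_{n}}])\leq \begin{cases}4 &\text{if } m\equiv 1 \pmod 4,\\ 3 &\text{if } m\equiv 3 \pmod 4,\\ 4 &\text{if $m$ is even.}\end{cases}$$
   Context: All graphs are finite, simple and undirected. For a graph $G=(V,E)$ of order $N$ without isolated vertices, a bijection $f\colon V\to\{1,2,\dots,N\}$ is a local distance antimagic labeling if $w(u)\neq w(v)$ for every edge $uv$, where $w(u)=\sum_{x\in N(u)}f(x)$ and $N(u)$ is the open neighborhood of $u$. $\chi_{ld}(G)$ is the minimum number of distinct weights over all local distance antimagic labelings of $G$. $P_m$ is the path on $m$ vertices, $\overline{K_n}$ the edgeless graph on $n$ vertices. The lexicographic product $G[H]$ has vertex set $V(G)\times V(H)$, with $(g,h)$ adjacent to $(g',h')$ iff $gg'\in E(G)$, or $g=g'$ and $hh'\in E(H)$. *)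

theory Defs
  imports Main
begin

text \<open>A finite simple graph is given by a vertex set V and an adjacency
relation E (assumed symmetric and irreflexive on V where relevant).\<close>

definition nbhd :: "'a set \<Rightarrow> ('a \<Rightarrow> 'a \<Rightarrow> bool) \<Rightarrow> 'a \<Rightarrow> 'a set" where
  "nbhd V E u = {x \<in> V. E u x}"

definition ld_weight :: "'a set \<Rightarrow> ('a \<Rightarrow> 'a \<Rightarrow> bool) \<Rightarrow> ('a \<Rightarrow> nat) \<Rightarrow> 'a \<Rightarrow> nat" where
  "ld_weight V E f u = (\<Sum>x \<in> nbhd V E u. f x)"

definition local_dist_antimagic :: "'a set \<Rightarrow> ('a \<Rightarrow> 'a \<Rightarrow> bool) \<Rightarrow> ('a \<Rightarrow> nat) \<Rightarrow> bool" where
  "local_dist_antimagic V E f \<longleftrightarrow>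
     bij_betw f V {1..card V} \<and>
     (\<forall>u\<in>V. \<forall>v\<in>V. E u v \<longrightarrow> ld_weight V E f u \<noteq> ld_weight V E f v)"

definition chi_ld :: "'a set \<Rightarrow> ('a \<Rightarrow> 'a \<Rightarrow> bool) \<Rightarrow> nat" where
  "chi_ld V E = Min {card (ld_weight V E f ` V) | f. local_dist_antimagic V E f}"

definition path_V :: "nat \<Rightarrow> nat set" where "path_V m = {1..m}"
definition path_E :: "nat \<Rightarrow> nat \<Rightarrow> bool" where
  "path_E i j \<longleftrightarrow> i + 1 = j \<or> j + 1 = i"

definition empty_V :: "nat \<Rightarrow> nat set" where "empty_V n = {1..n}"
definition empty_E :: "nat \<Rightarrow> nat \<Rightarrow> bool" where "empty_E a b \<longleftrightarrow> False"

definition lex_V :: "'a set \<Rightarrow> 'b set \<Rightarrow> ('a \<times> 'b) set" where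
  "lex_V VG VH = VG \<times> VH"
definition lex_E :: "('a \<Rightarrow> 'a \<Rightarrow> bool) \<Rightarrow> ('b \<Rightarrow> 'b \<Rightarrow> bool) \<Rightarrow> 'a \<times> 'b \<Rightarrow> 'a \<times> 'b \<Rightarrow> bool" where
  "lex_E EG EH p q \<longleftrightarrow> EG (fst p) (fst q) \<or> (fst p = fst q \<and> EH (snd p) (snd q))"

end

theory Submission
  imports Defs
begin

definition alph :: "nat \<Rightarrow> nat \<Rightarrow> nat" where
  "alph m i = (if odd i then (m+1) div 2 + 1 - (i+1) div 2 else m + 1 - i div 2)"

definition sig :: "nat \<Rightarrow> nat \<Rightarrow> nat \<Rightarrow> nat" where
  "sig m a i = (if a = 1 then i else if a \<le> 3 then alph m i else if even a then i else m + 1 - i)"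

definition lab :: "nat \<Rightarrow> nat \<times> nat \<Rightarrow> nat" where
  "lab m p = (snd p - 1) * m + sig m (snd p) (fst p)"

lemma hfacts: "m \<le> 2 * ((m+1) div 2)" "2 * ((m+1) div 2) \<le> m + 1" "(m::nat) - m div 2 = (m+1) div 2"
  by presburger+

lemma odd_decomp: "odd (i::nat) \<Longrightarrow> i = 2 * (i div 2) + 1" by presburger
lemma even_decomp: "even (i::nat) \<Longrightarrow> i = 2 * (i div 2)" by presburger

lemma alph_odd: assumes "odd i" "1 \<le> i" "i \<le> m"
  shows "1 \<le> alph m i" "alph m i \<le> (m+1) div 2" "i + 2 * alph m i = 2 * ((m+1) div 2) + 1"
proof -
  define t where "t = i div 2"
  define h where "h = (m+1) div 2"
  have i: "i = 2*t+1" using odd_decomp[OF assms(1)] t_def by simp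
  have hm: "m \<le> 2*h" "2*h \<le> m+1" using hfacts[of m] h_def by auto
  have a: "alph m i = h + 1 - (t+1)" using assms(1) i by (simp add: alph_def h_def)
  have "t < h" using i hm assms by linarith
  then show "1 \<le> alph m i" "alph m i \<le> (m+1) div 2" "i + 2 * alph m i = 2 * ((m+1) div 2) + 1"
    using a i h_def by auto
qed

lemma alph_even: assumes "even i" "1 \<le> i" "i \<le> m"
  shows "(m+1) div 2 < alph m i" "alph m i \<le> m" "i + 2 * alph m i = 2*m+2"
proof -
  define t where "t = i div 2"
  define h where "h = (m+1) div 2"
  have i: "i = 2*t" using even_decomp[OF assms(1)] t_def by simp
  have hm: "m \<le> 2*h" "2*h \<le> m+1" using hfacts[of m] h_def by auto
  have a: "alph m i = m + 1 - t" using assms(1) i by (simp add: alph_def)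
  have "1 \<le> t" "2*t \<le> m" using i assms by linarith+
  then show "(m+1) div 2 < alph m i" "alph m i \<le> m" "i + 2 * alph m i = 2*m+2"
    using a i h_def hm by auto
qed

lemma alph_range: "1 \<le> i \<Longrightarrow> i \<le> m \<Longrightarrow> 1 \<le> alph m i \<and> alph m i \<le> m"
proof -
  assume a: "1 \<le> i" "i \<le> m"
  have "(m+1) div 2 \<le> m" using a hfacts(2)[of m] by linarith
  then show ?thesis using alph_odd[of i m] alph_even[of i m] a by (cases "odd i") auto
qed

lemma alph_inj: assumes "1 \<le> i" "i \<le> m" "1 \<le> j" "j \<le> m" "alph m i = alph m j" shows "i = j"
proof -
  have pij: "odd i \<longleftrightarrow> odd j"
    using alph_odd[of i m] alph_even[of i m] alph_odd[of j m] alph_even[of j m] assms by fastforce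
  show ?thesis
  proof (cases "odd i")
    case True
    then have "i + 2 * alph m i = j + 2 * alph m j" using pij alph_odd(3)[of i m] alph_odd(3)[of j m] assms by simp
    then show ?thesis using assms(5) by simp
  next
    case False
    then have "i + 2 * alph m i = j + 2 * alph m j" using pij alph_even(3)[of i m] alph_even(3)[of j m] assms by simp
    then show ?thesis using assms(5) by simp
  qed
qed

lemma alph_sum: "1 \<le> i \<Longrightarrow> i \<le> m \<Longrightarrow>
   i + 2 * alph m i = (if odd i then 2 * ((m+1) div 2) + 1 else 2*m+2)"
  using alph_odd(3)[of i m] alph_even(3)[of i m] by auto

lemma sig_range: "1 \<le> i \<Longrightarrow> i \<le> m \<Longrightarrow> 1 \<le> sig m a i \<and> sig m a i \<le> m"
  unfolding sig_def using alph_range[of i m] by auto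

lemma sig_inj: "1 \<le> i \<Longrightarrow> i \<le> m \<Longrightarrow> 1 \<le> j \<Longrightarrow> j \<le> m \<Longrightarrow> sig m a i = sig m a j \<Longrightarrow> i = j"
  unfolding sig_def using alph_inj[of i m j] by (auto split: if_splits)

lemma blk: fixes x y s t m :: nat
  assumes "x*m + s = y*m + t" "1 \<le> s" "s \<le> m" "1 \<le> t" "t \<le> m"
  shows "x = y"
proof (rule ccontr)
  assume "x \<noteq> y"
  then consider "x < y" | "y < x" by linarith
  then show False
  proof cases
    case 1
    then have "(x+1)*m \<le> y*m" by (intro mult_le_mono1) simp
    then show False using assms by simp
  next
    case 2
    then have "(y+1)*m \<le> x*m" by (intro mult_le_mono1) simp
    then show False using assms by simp
  qed
qed

lemma lab_bij:
  assumes "m \<ge> 1"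
  shows "bij_betw (lab m) ({1..m} \<times> {1..n}) {1..m*n}"
proof -
  have inj: "inj_on (lab m) ({1..m} \<times> {1..n})"
  proof (rule inj_onI)
    fix p q assume p: "p \<in> {1..m} \<times> {1..n}" and q: "q \<in> {1..m} \<times> {1..n}" and e: "lab m p = lab m q"
    obtain i a where pi: "p = (i,a)" by force
    obtain j b where qj: "q = (j,b)" by force
    have r1: "1 \<le> sig m a i \<and> sig m a i \<le> m" using sig_range p pi by auto
    have r2: "1 \<le> sig m b j \<and> sig m b j \<le> m" using sig_range q qj by auto
    have e2: "(a-1)*m + sig m a i = (b-1)*m + sig m b j" using e pi qj by (simp add: lab_def)
    have "a - 1 = b - 1" using blk[OF e2] r1 r2 by auto
    then have ab: "a = b" using p q pi qj by auto
    then have "sig m a i = sig m a j" using e2 by simp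
    then have "i = j" using sig_inj p q pi qj by auto
    then show "p = q" using ab pi qj by simp
  qed
  have sub: "lab m ` ({1..m} \<times> {1..n}) \<subseteq> {1..m*n}"
  proof
    fix y assume "y \<in> lab m ` ({1..m} \<times> {1..n})"
    then obtain i a where ia: "i \<in> {1..m}" "a \<in> {1..n}" "y = lab m (i,a)" by auto
    have r: "1 \<le> sig m a i \<and> sig m a i \<le> m" using sig_range ia by auto
    have "a-1 \<le> n-1" using ia by auto
    then have h1: "(a-1)*m \<le> (n-1)*m" by (rule mult_le_mono1)
    have h2: "(n-1)*m + m = m*n" using ia by (cases n) auto
    have "(a-1)*m + sig m a i \<le> m*n" using h1 h2 r by linarith
    then show "y \<in> {1..m*n}" using r ia by (simp add: lab_def)
  qed
  have "card (lab m ` ({1..m} \<times> {1..n})) = card {1..m*n}"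
    using card_image[OF inj] by (simp add: card_cartesian_product)
  then have "lab m ` ({1..m} \<times> {1..n}) = {1..m*n}"
    using sub by (intro card_subset_eq) auto
  then show ?thesis using inj by (simp add: bij_betw_def)
qed

lemma tail_sum: "i \<le> m \<Longrightarrow> (\<Sum>a\<in>{4..2*k+3}. sig m a i) = k*(m+1)"
proof (induction k)
  case 0
  then show ?case by simp
next
  case (Suc k)
  have s: "{4..2*Suc k+3} = insert (2*k+5) (insert (2*k+4) {4..2*k+3})" by auto
  have a: "sig m (2*k+4) i = i" by (simp add: sig_def)
  have b: "sig m (2*k+5) i = m+1-i" by (simp add: sig_def)
  have "(\<Sum>a\<in>{4..2*Suc k+3}. sig m a i) = sig m (2*k+5) i + (sig m (2*k+4) i + (\<Sum>a\<in>{4..2*k+3}. sig m a i))"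
    unfolding s by (subst sum.insert, simp, simp, subst sum.insert, simp_all)
  also have "\<dots> = (m+1-i) + (i + k*(m+1))" using a b Suc by simp
  also have "\<dots> = Suc k * (m+1)" using Suc.prems by simp
  finally show ?case .
qed

lemma row_sum:
  assumes n: "n = 2*k+3" and i: "1 \<le> i" "i \<le> m"
  shows "(\<Sum>a\<in>{1..n}. lab m (i,a)) = ((\<Sum>a\<in>{1..n}. (a-1)*m) + k*(m+1))
            + (if odd i then 2*((m+1) div 2)+1 else 2*m+2)"
proof -
  have "(\<Sum>a\<in>{1..n}. lab m (i,a)) = (\<Sum>a\<in>{1..n}. (a-1)*m) + (\<Sum>a\<in>{1..n}. sig m a i)"
    by (simp add: lab_def sum.distrib)
  moreover have "{1..n} = insert 1 (insert 2 (insert 3 {4..2*k+3}))" using n by auto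
  then have "(\<Sum>a\<in>{1..n}. sig m a i) = i + 2 * alph m i + k*(m+1)"
    using tail_sum[of i m k] i by (simp add: sig_def)
  ultimately show ?thesis using alph_sum[OF i] by simp
qed

lemma sumN:
  fixes i m :: nat and g :: "nat \<Rightarrow> nat"
  assumes "1 \<le> i" "i \<le> m"
  shows "(\<Sum>j\<in>{j\<in>{1..m}. i+1=j \<or> j+1=i}. g j) =
     (if 2 \<le> i then g (i-1) else 0) + (if i+1 \<le> m then g (i+1) else 0)"
proof (cases "2 \<le> i"; cases "i+1 \<le> m")
  assume "2 \<le> i" "i+1 \<le> m"
  then have "{j\<in>{1..m}. i+1=j \<or> j+1=i} = {i-1, i+1}" by auto
  then show ?thesis using \<open>2 \<le> i\<close> \<open>i+1 \<le> m\<close> by simp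
next
  assume "2 \<le> i" "\<not> i+1 \<le> m"
  then have "{j\<in>{1..m}. i+1=j \<or> j+1=i} = {i-1}" using assms by auto
  then show ?thesis using \<open>2 \<le> i\<close> \<open>\<not> i+1 \<le> m\<close> by simp
next
  assume "\<not> 2 \<le> i" "i+1 \<le> m"
  then have "{j\<in>{1..m}. i+1=j \<or> j+1=i} = {i+1}" using assms by auto
  then show ?thesis using \<open>\<not> 2 \<le> i\<close> \<open>i+1 \<le> m\<close> by simp
next
  assume "\<not> 2 \<le> i" "\<not> i+1 \<le> m"
  then have eq: "{j\<in>{1..m}. i+1=j \<or> j+1=i} = {}" using assms by auto
  then show ?thesis apply (subst eq) using \<open>\<not> 2 \<le> i\<close> \<open>\<not> i+1 \<le> m\<close> by simp
qed

lemma weight_eq: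
  assumes "i \<in> {1..m}" "a \<in> {1..n}"
  shows "ld_weight (lex_V (path_V m) (empty_V n)) (lex_E path_E empty_E) (lab m) (i,a)
     = (\<Sum>j\<in>{j\<in>{1..m}. i+1=j \<or> j+1=i}. \<Sum>b\<in>{1..n}. lab m (j,b))"
proof -
  have "nbhd (lex_V (path_V m) (empty_V n)) (lex_E path_E empty_E) (i,a)
        = {j\<in>{1..m}. i+1=j \<or> j+1=i} \<times> {1..n}"
    by (auto simp: nbhd_def lex_V_def path_V_def empty_V_def lex_E_def path_E_def empty_E_def)
  then show ?thesis unfolding ld_weight_def by (simp add: sum.cartesian_product)
qed


theorem mainTheorem11:
  fixes m n :: nat
  assumes "odd n" and "n > 1" and "m \<ge> 3"
  shows "chi_ld (lex_V (path_V m) (empty_V n)) (lex_E path_E empty_E)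
           \<le> (if m mod 4 = 1 then 4 else if m mod 4 = 3 then 3 else 4)"
proof -
  define V where "V = lex_V (path_V m) (empty_V n)"
  define E where "E = lex_E path_E empty_E"
  have V: "V = {1..m} \<times> {1..n}" by (simp add: V_def lex_V_def path_V_def empty_V_def)
  obtain q where q: "n = 2*q+1" using assms(1) oddE by blast
  define k where "k = q - 1"
  have n: "n = 2*k+3" using q assms(2) k_def by auto
  define K where "K = (\<Sum>a\<in>{1..n}. (a-1)*m) + k*(m+1)"
  define A where "A = K + 2*((m+1) div 2)+1"
  define B where "B = K + 2*m+2"
  define S where "S j = (if odd j then A else B)" for j :: nat
  have "(2-1)*m \<le> (\<Sum>a\<in>{1..n}. (a-1)*m)"
    by (rule member_le_sum) (use n in auto)
  then have Kpos: "K \<ge> m" by (simp add: K_def)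
  have h1: "2*((m+1) div 2) \<le> m + 1" "m \<le> 2*((m+1) div 2)" by presburger+
  have AB: "A < B" "B < 2*A" using Kpos h1 assms(3) by (auto simp: A_def B_def)
  have rows: "(\<Sum>b\<in>{1..n}. lab m (j,b)) = S j" if "j \<in> {1..m}" for j
    using row_sum[OF n, of j m] that by (simp add: S_def A_def B_def K_def)
  define wt where "wt i = (if 2 \<le> i then S (i-1) else 0) + (if i+1 \<le> m then S (i+1) else 0)" for i
  have W: "ld_weight V E (lab m) (i,a) = wt i" if "i \<in> {1..m}" "a \<in> {1..n}" for i a
  proof -
    have "ld_weight V E (lab m) (i,a) = (\<Sum>j\<in>{j\<in>{1..m}. i+1=j \<or> j+1=i}. \<Sum>b\<in>{1..n}. lab m (j,b))"
      using weight_eq[OF that] by (simp add: V_def E_def)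
    also have "\<dots> = (\<Sum>j\<in>{j\<in>{1..m}. i+1=j \<or> j+1=i}. S j)"
      by (rule sum.cong[OF refl], rule rows) auto
    also have "\<dots> = wt i" using sumN[of i m S] that by (simp add: wt_def)
    finally show ?thesis .
  qed
  have wodd: "wt i = B \<or> wt i = 2*B" if "i \<in> {1..m}" "odd i" for i
  proof -
    have "2 \<le> i \<or> i+1 \<le> m" using that assms(3) by auto
    then show ?thesis using that by (auto simp: wt_def S_def)
  qed
  have weven: "wt i = A \<or> wt i = 2*A" if "i \<in> {1..m}" "even i" for i
  proof -
    have "1 \<le> i" "even i" using that by auto
    then have "2 \<le> i" by presburger
    then show ?thesis using that by (auto simp: wt_def S_def)
  qed
  have weven2: "wt i = 2*A" if "i \<in> {1..m}" "even i" "odd m" for i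
  proof -
    have "1 \<le> i" "even i" using that by auto
    then have "2 \<le> i" by presburger
    moreover have "i+1 \<le> m" using that by (cases "i = m") auto
    ultimately show ?thesis using that by (auto simp: wt_def S_def)
  qed
  have bij: "bij_betw (lab m) V {1..card V}"
    using lab_bij[of m n] assms(3) V by (simp add: card_cartesian_product)
  have lda: "local_dist_antimagic V E (lab m)"
    unfolding local_dist_antimagic_def
  proof (intro conjI bij ballI impI)
    fix u v assume u: "u \<in> V" and v: "v \<in> V" and e: "E u v"
    obtain i a where ia: "u = (i,a)" by force
    obtain j b where jb: "v = (j,b)" by force
    have iV: "i \<in> {1..m}" "a \<in> {1..n}" using u ia V by auto
    have jV: "j \<in> {1..m}" "b \<in> {1..n}" using v jb V by auto
    have ij: "i + 1 = j \<or> j + 1 = i" using e ia jb by (simp add: E_def lex_E_def path_E_def empty_E_def)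
    have par: "odd i \<longleftrightarrow> even j" using ij by auto
    have "wt i \<noteq> wt j"
    proof (cases "odd i")
      case True
      then show ?thesis using wodd[OF iV(1) True] weven[of j] jV par AB by auto
    next
      case False
      then show ?thesis using weven[of i] wodd[of j] iV jV par AB by auto
    qed
    then show "ld_weight V E (lab m) u \<noteq> ld_weight V E (lab m) v"
      using W iV jV ia jb by simp
  qed
  have img: "ld_weight V E (lab m) ` V \<subseteq> {A, 2*A, B, 2*B}"
  proof
    fix y assume "y \<in> ld_weight V E (lab m) ` V"
    then obtain i a where "i \<in> {1..m}" "a \<in> {1..n}" "y = wt i" using V W by auto
    then show "y \<in> {A, 2*A, B, 2*B}" using wodd weven by blast
  qed
  have img2: "ld_weight V E (lab m) ` V \<subseteq> {2*A, B, 2*B}" if "odd m"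
  proof
    fix y assume "y \<in> ld_weight V E (lab m) ` V"
    then obtain i a where "i \<in> {1..m}" "a \<in> {1..n}" "y = wt i" using V W by auto
    then show "y \<in> {2*A, B, 2*B}" using wodd weven2 that by blast
  qed
  have c4: "card (ld_weight V E (lab m) ` V) \<le> 4"
  proof -
    have "card (ld_weight V E (lab m) ` V) \<le> card (set [A, 2*A, B, 2*B])"
      using img by (intro card_mono) auto
    also have "\<dots> \<le> 4" using card_length[of "[A, 2*A, B, 2*B]"] by simp
    finally show ?thesis .
  qed
  have c3: "card (ld_weight V E (lab m) ` V) \<le> 3" if "odd m"
  proof -
    have "card (ld_weight V E (lab m) ` V) \<le> card (set [2*A, B, 2*B])"
      using img2[OF that] by (intro card_mono) auto
    also have "\<dots> \<le> 3" using card_length[of "[2*A, B, 2*B]"] by simp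
    finally show ?thesis .
  qed
  define X where "X = {card (ld_weight V E f ` V) | f. local_dist_antimagic V E f}"
  have finV: "finite V" using V by simp
  have "X \<subseteq> {0..card V}" unfolding X_def using card_image_le[OF finV] by auto
  then have finX: "finite X" using finite_subset by blast
  have mem: "card (ld_weight V E (lab m) ` V) \<in> X" unfolding X_def using lda by blast
  have "chi_ld V E \<le> card (ld_weight V E (lab m) ` V)"
    unfolding chi_ld_def X_def[symmetric] using Min_le[OF finX mem] .
  moreover have "card (ld_weight V E (lab m) ` V)
       \<le> (if m mod 4 = 1 then 4 else if m mod 4 = 3 then 3 else 4)"
  proof (cases "m mod 4 = 3")
    case True
    then have "odd m" by presburger
    then show ?thesis using c3 True by simp
  next
    case False
    then show ?thesis using c4 by simp
  qed
  ultimately show ?thesis by (simp add: V_def E_def)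
qed

end
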